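(* Let $(A_1,\lambda_1)\in\Lambda^*_{2,p}$, let $\varphi:(A_1,\lambda_1)\to(A,\lambda)$ be a degree-$p$ isogeny onto a principally polarized abelian surface with $\varphi^*\lambda=\lambda_1$, corresponding to $\xi\in\mathbf P^1(k)$ with $\xi\notin\mathbf P^1(\mathbb F_{p^2})$, and let $M$ (with $VN\subset M\subset N$) be the covariant Dieudonné module of $A$. Then $\ker\pi\subset U_x$, where $U_x=\{\phi\in U_{x_1}:\phi(M)=M\}$.
   Context: $k$ is algebraically closed of characteristic $p$, $W=W(k)$. $\Lambda^*_{2,p}$ is the set of isomorphism classes of polarized superspecial abelian surfaces $(A_1,\lambda_1)$ over $k$ with $\deg\lambda_1=p^2$ and $\ker\lambda_1\simeq\alpha_p\times\alpha_p$. Let $(M_1,\langle\,,\rangle)$ be the covariant Dieudonné module of $A_1$ with pairing from $\lambda_1$, $N\subset M_1\otimes\mathbb Q$ with $VN=M_1$, $\langle\,,\rangle_N=p\langle\,,\rangle$, and $U_{x_1}=\mathrm{Aut}_{\mathcal{DM}}(N,\langle\,,\rangle_N)$ (automorphisms commuting with $F,V$ preserving the pairing). There is a $W$-basis $e_1,\dots,e_4$ of $N$ with $Fe_1=e_2,Fe_2=-pe_1,Fe_3=e_4,Fe_4=-pe_3$, $\langle e_1,e_3\rangle_N=1$, $\langle e_2,e_4\rangle_N=p$ (other pairings of basis vectors zero up to antisymmetry). $\tilde N$ is the $W(\mathbb F_{p^2})$-span of the $e_i$, $V_0=\tilde N/V\tilde N=\mathbb F_{p^2}\bar e_1\oplus\mathbb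 F_{p^2}\bar e_3$ with induced pairing, and $\pi:U_{x_1}\to\mathrm{Aut}(V_0,\langle\,,\rangle)=\mathrm{SL}_2(\mathbb F_{p^2})$ is the induced homomorphism. Via $\varphi_*$, $M_1\subset M$, and $M=VN+Wv$ with $v=a'e_1+b'e_3$, where $\xi=[a:b]$ (coordinates with respect to $\bar e_1,\bar e_3$) and $a',b'\in W$ lift $a,b$. *)

theory Defs
  imports "HOL-Computational_Algebra.Polynomial"
begin

(* Elements of N are written in coordinates w.r.t. the W-basis e1,e2,e3,e4:
   (x1,x2,x3,x4) stands for x1 e1 + x2 e2 + x3 e3 + x4 e4. *)
type_synonym 'w vec4 = "'w \<times> 'w \<times> 'w \<times> 'w"

definition add4 :: "'w::comm_ring_1 vec4 \<Rightarrow> 'w vec4 \<Rightarrow> 'w vec4" where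
  "add4 x y = (case x of (x1,x2,x3,x4) \<Rightarrow> case y of (y1,y2,y3,y4) \<Rightarrow>
      (x1+y1, x2+y2, x3+y3, x4+y4))"

definition diff4 :: "'w::comm_ring_1 vec4 \<Rightarrow> 'w vec4 \<Rightarrow> 'w vec4" where
  "diff4 x y = (case x of (x1,x2,x3,x4) \<Rightarrow> case y of (y1,y2,y3,y4) \<Rightarrow>
      (x1-y1, x2-y2, x3-y3, x4-y4))"

definition smul4 :: "'w::comm_ring_1 \<Rightarrow> 'w vec4 \<Rightarrow> 'w vec4" where
  "smul4 c x = (case x of (x1,x2,x3,x4) \<Rightarrow> (c*x1, c*x2, c*x3, c*x4))"

(* Frobenius F: sigma-semilinear, Fe1=e2, Fe2=-p e1, Fe3=e4, Fe4=-p e3 *)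
definition Fop :: "('w::comm_ring_1 \<Rightarrow> 'w) \<Rightarrow> nat \<Rightarrow> 'w vec4 \<Rightarrow> 'w vec4" where
  "Fop \<sigma> p x = (case x of (x1,x2,x3,x4) \<Rightarrow>
      (- (of_nat p * \<sigma> x2), \<sigma> x1, - (of_nat p * \<sigma> x4), \<sigma> x3))"

(* Verschiebung V = p F^{-1}: sigma^{-1}-semilinear,
   Ve1=-e2, Ve2=p e1, Ve3=-e4, Ve4=p e3 *)
definition Vop :: "('w::comm_ring_1 \<Rightarrow> 'w) \<Rightarrow> nat \<Rightarrow> 'w vec4 \<Rightarrow> 'w vec4" where
  "Vop \<sigma> p x = (case x of (x1,x2,x3,x4) \<Rightarrow>
      (of_nat p * inv \<sigma> x2, - inv \<sigma> x1, of_nat p * inv \<sigma> x4, - inv \<sigma> x3))"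

definition pairN :: "nat \<Rightarrow> 'w::comm_ring_1 vec4 \<Rightarrow> 'w vec4 \<Rightarrow> 'w" where
  "pairN p x y = (case x of (x1,x2,x3,x4) \<Rightarrow> case y of (y1,y2,y3,y4) \<Rightarrow>
      x1*y3 - x3*y1 + of_nat p * (x2*y4 - x4*y2))"

definition linear4 :: "('w::comm_ring_1 vec4 \<Rightarrow> 'w vec4) \<Rightarrow> bool" where
  "linear4 \<phi> \<longleftrightarrow> (\<forall>x y. \<phi> (add4 x y) = add4 (\<phi> x) (\<phi> y)) \<and>
                   (\<forall>c x. \<phi> (smul4 c x) = smul4 c (\<phi> x))"

definition U_x1 :: "('w::comm_ring_1 \<Rightarrow> 'w) \<Rightarrow> nat \<Rightarrow> ('w vec4 \<Rightarrow> 'w vec4) set" where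
  "U_x1 \<sigma> p = {\<phi>. linear4 \<phi> \<and> bij \<phi> \<and>
      \<phi> \<circ> Fop \<sigma> p = Fop \<sigma> p \<circ> \<phi> \<and> \<phi> \<circ> Vop \<sigma> p = Vop \<sigma> p \<circ> \<phi> \<and>
      (\<forall>x y. pairN p (\<phi> x) (\<phi> y) = pairN p x y)}"

(* W(F_{p^2}) inside W = W(k): the fixed ring of sigma^2 *)
definition Wp2 :: "('w \<Rightarrow> 'w) \<Rightarrow> 'w set" where
  "Wp2 \<sigma> = {c. \<sigma> (\<sigma> c) = c}"

(* N~ = W(F_{p^2})-span of e1,...,e4 *)
definition Ntilde :: "('w \<Rightarrow> 'w) \<Rightarrow> 'w vec4 set" where
  "Ntilde \<sigma> = {(x1,x2,x3,x4). x1 \<in> Wp2 \<sigma> \<and> x2 \<in> Wp2 \<sigma> \<and> x3 \<in> Wp2 \<sigma> \<and> x4 \<in> Wp2 \<sigma>}"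

(* ker pi: elements of U_{x_1} inducing the identity on V_0 = N~ / V N~ *)
definition ker_pi :: "('w::comm_ring_1 \<Rightarrow> 'w) \<Rightarrow> nat \<Rightarrow> ('w vec4 \<Rightarrow> 'w vec4) set" where
  "ker_pi \<sigma> p = {\<phi> \<in> U_x1 \<sigma> p.
      \<forall>n \<in> Ntilde \<sigma>. diff4 (\<phi> n) n \<in> Vop \<sigma> p ` Ntilde \<sigma>}"

definition Mmod :: "('w::comm_ring_1 \<Rightarrow> 'w) \<Rightarrow> nat \<Rightarrow> 'w vec4 \<Rightarrow> 'w vec4 set" where
  "Mmod \<sigma> p v = {add4 (Vop \<sigma> p y) (smul4 c v) | y c. True}"

definition U_x :: "('w::comm_ring_1 \<Rightarrow> 'w) \<Rightarrow> nat \<Rightarrow> 'w vec4 \<Rightarrow> ('w vec4 \<Rightarrow> 'w vec4) set" where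
  "U_x \<sigma> p v = {\<phi> \<in> U_x1 \<sigma> p. \<phi> ` Mmod \<sigma> p v = Mmod \<sigma> p v}"

end

theory Submission
  imports Defs
begin

definition PV :: "nat \<Rightarrow> 'w::comm_ring_1 vec4 \<Rightarrow> bool" where
  "PV p x \<longleftrightarrow> of_nat p dvd fst x \<and> of_nat p dvd fst (snd (snd x))"

lemma rangeV:
  assumes "inj \<sigma>"
  shows "x \<in> range (Vop \<sigma> p) \<longleftrightarrow> PV p (x :: 'w::comm_ring_1 vec4)"
proof
  assume "x \<in> range (Vop \<sigma> p)"
  then obtain y where "x = Vop \<sigma> p y" by auto
  then show "PV p x" by (cases y) (auto simp: Vop_def PV_def)
next
  assume "PV p x"
  obtain x1 x2 x3 x4 where x: "x = (x1,x2,x3,x4)" by (cases x) auto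
  with \<open>PV p x\<close> obtain u u' where u: "x1 = of_nat p * u" "x3 = of_nat p * u'"
    by (auto simp: PV_def elim!: dvdE)
  have "Vop \<sigma> p (\<sigma> (-x2), \<sigma> u, \<sigma> (-x4), \<sigma> u') = x"
    using x u by (simp add: Vop_def inv_f_f[OF assms])
  then show "x \<in> range (Vop \<sigma> p)" by (metis rangeI)
qed

lemma PV_simp: "PV p (x1,x2,x3,x4) \<longleftrightarrow> of_nat p dvd x1 \<and> of_nat p dvd x3"
  by (simp add: PV_def)

definition SM :: "nat \<Rightarrow> 'w::comm_ring_1 \<Rightarrow> 'w \<Rightarrow> 'w vec4 set" where
  "SM p a' b' = {x. \<exists>c. of_nat p dvd fst x - c*a' \<and> of_nat p dvd fst (snd (snd x)) - c*b'}"

lemma Mmod_char: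
  assumes "inj \<sigma>"
  shows "Mmod \<sigma> p (a',0,b',0) = SM p (a'::'w::comm_ring_1) b'"
proof
  show "Mmod \<sigma> p (a',0,b',0) \<subseteq> SM p a' b'"
  proof
    fix x assume "x \<in> Mmod \<sigma> p (a',0,b',0)"
    then obtain y c where x: "x = add4 (Vop \<sigma> p y) (smul4 c (a',0,b',0))"
      by (auto simp: Mmod_def)
    obtain m1 m2 m3 m4 where m: "Vop \<sigma> p y = (m1,m2,m3,m4)" by (cases "Vop \<sigma> p y") auto
    have "PV p (Vop \<sigma> p y)" using rangeV[OF assms] by blast
    then show "x \<in> SM p a' b'" using x m
      by (auto simp: SM_def add4_def smul4_def PV_simp intro!: exI[of _ c])
  qed
next
  show "SM p a' b' \<subseteq> Mmod \<sigma> p (a',0,b',0)"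
  proof
    fix x assume "x \<in> SM p a' b'"
    obtain x1 x2 x3 x4 where x: "x = (x1,x2,x3,x4)" by (cases x) auto
    with \<open>x \<in> SM p a' b'\<close> obtain c where c: "of_nat p dvd x1 - c*a'" "of_nat p dvd x3 - c*b'"
      by (auto simp: SM_def)
    have "PV p (x1 - c*a', x2, x3 - c*b', x4)" using c by (simp add: PV_simp)
    then obtain y where y: "Vop \<sigma> p y = (x1 - c*a', x2, x3 - c*b', x4)"
      using rangeV[OF assms] by (metis imageE)
    have "x = add4 (Vop \<sigma> p y) (smul4 c (a',0,b',0))"
      using x y by (simp add: add4_def smul4_def)
    then show "x \<in> Mmod \<sigma> p (a',0,b',0)" unfolding Mmod_def by blast
  qed
qed

lemma diff4_lin:
  assumes "linear4 \<phi>"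
  shows "\<phi> (diff4 x y) = diff4 (\<phi> x) (\<phi> (y :: 'w::comm_ring_1 vec4))"
proof -
  have e: "\<And>x y :: 'w vec4. diff4 x y = add4 x (smul4 (-1) y)"
    by (auto simp: diff4_def add4_def smul4_def split: prod.splits)
  show ?thesis using assms unfolding e linear4_def by metis
qed

theorem lemma4p2:
  fixes \<sigma> :: "'w::idom \<Rightarrow> 'w"
    and red :: "'w \<Rightarrow> 'k::field"
    and p :: nat
    and a b :: 'k
    and a' b' :: 'w
  assumes p_prime: "prime p"
    and k_char: "CHAR('k) = p"
    and k_alg_closed: "\<forall>q :: 'k poly. degree q > 0 \<longrightarrow> (\<exists>x. poly q x = 0)"
    and sigma_bij: "bij \<sigma>"
    and sigma_add: "\<forall>x y. \<sigma> (x + y) = \<sigma> x + \<sigma> y"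
    and sigma_mult: "\<forall>x y. \<sigma> (x * y) = \<sigma> x * \<sigma> y"
    and sigma_one: "\<sigma> 1 = 1"
    and red_surj: "surj red"
    and red_add: "\<forall>x y. red (x + y) = red x + red y"
    and red_mult: "\<forall>x y. red (x * y) = red x * red y"
    and red_one: "red 1 = 1"
    and red_ker: "\<forall>c. red c = 0 \<longleftrightarrow> (of_nat p :: 'w) dvd c"
    and red_sigma: "\<forall>c. red (\<sigma> c) = red c ^ p"
    and W_sep: "\<forall>c. (\<forall>n. (of_nat p :: 'w) ^ n dvd c) \<longrightarrow> c = 0"
    and xi_proj: "(a, b) \<noteq> (0, 0)"
    and lift_a: "red a' = a"
    and lift_b: "red b' = b"
    and xi_not_Fp2: "\<not> (\<exists>c d :: 'k. (c, d) \<noteq> (0, 0) \<and> c ^ (p^2) = c \<and> d ^ (p^2) = d \<and> a * d = b * c)"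
  shows "ker_pi \<sigma> p \<subseteq> U_x \<sigma> p (a', 0, b', 0)"
proof
  fix \<phi> assume phk: "\<phi> \<in> ker_pi \<sigma> p"
  have inj: "inj \<sigma>" using sigma_bij bij_is_inj by blast
  have s0: "\<sigma> 0 = 0" using sigma_add by (metis add_cancel_right_right)
  from phk have U: "\<phi> \<in> U_x1 \<sigma> p" and K: "\<forall>n \<in> Ntilde \<sigma>. diff4 (\<phi> n) n \<in> Vop \<sigma> p ` Ntilde \<sigma>"
    by (auto simp: ker_pi_def)
  from U have lin: "linear4 \<phi>" and bij: "bij \<phi>" and comV: "\<phi> \<circ> Vop \<sigma> p = Vop \<sigma> p \<circ> \<phi>"
    by (auto simp: U_x1_def)
  have add: "\<And>x y. \<phi> (add4 x y) = add4 (\<phi> x) (\<phi> y)"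
    and smul: "\<And>c x. \<phi> (smul4 c x) = smul4 c (\<phi> x)" using lin by (auto simp: linear4_def)
  have cV: "\<And>y. \<phi> (Vop \<sigma> p y) = Vop \<sigma> p (\<phi> y)" using comV by (metis comp_apply)
  have PVk: "\<And>n. n \<in> Ntilde \<sigma> \<Longrightarrow> PV p (diff4 (\<phi> n) n)"
    using K rangeV[OF inj] by blast
  have e1: "(1,0,0,0) \<in> Ntilde \<sigma>" "(0,0,1,0) \<in> Ntilde \<sigma>"
    by (auto simp: Ntilde_def Wp2_def s0 sigma_one)
  obtain f1 f2 f3 f4 where f: "\<phi> (1,0,0,0) = (f1,f2,f3,f4)" by (cases "\<phi> (1,0,0,0)") auto
  obtain g1 g2 g3 g4 where g: "\<phi> (0,0,1,0) = (g1,g2,g3,g4)" by (cases "\<phi> (0,0,1,0)") auto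
  have fp: "of_nat p dvd f1 - 1" "of_nat p dvd f3"
    using PVk[OF e1(1)] f by (auto simp: diff4_def PV_simp)
  have gp: "of_nat p dvd g1" "of_nat p dvd g3 - 1"
    using PVk[OF e1(2)] g by (auto simp: diff4_def PV_simp)
  define v where "v = ((a',0,b',0) :: 'w vec4)"
  have vdec: "v = add4 (smul4 a' (1,0,0,0)) (smul4 b' (0,0,1,0))"
    by (simp add: v_def add4_def smul4_def)
  have phv: "\<phi> v = (a'*f1 + b'*g1, a'*f2+b'*g2, a'*f3 + b'*g3, a'*f4+b'*g4)"
    unfolding vdec add smul f g by (simp add: add4_def smul4_def)
  have D: "PV p (diff4 (\<phi> v) v)"
  proof -
    have h1: "a'*f1 + b'*g1 - a' = a'*(f1-1) + b'*g1" by (simp add: algebra_simps)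
    have h2: "a'*f3 + b'*g3 - b' = a'*f3 + b'*(g3-1)" by (simp add: algebra_simps)
    have eq: "diff4 (\<phi> v) v = (a'*f1 + b'*g1 - a', a'*f2+b'*g2, a'*f3 + b'*g3 - b', a'*f4+b'*g4)"
      unfolding phv by (simp add: v_def diff4_def)
    show ?thesis unfolding eq PV_simp h1 h2 using fp gp by (simp add: dvd_add dvd_mult)
  qed
  have M: "Mmod \<sigma> p v = SM p a' b'" using Mmod_char[OF inj] v_def by simp
  have fwd: "\<phi> ` SM p a' b' \<subseteq> SM p a' b'"
  proof
    fix z assume "z \<in> \<phi> ` SM p a' b'"
    then obtain x where x: "x \<in> Mmod \<sigma> p v" and z: "z = \<phi> x" using M by auto
    then obtain y c where xe: "x = add4 (Vop \<sigma> p y) (smul4 c v)" by (auto simp: Mmod_def)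
    have "z = add4 (Vop \<sigma> p (\<phi> y)) (smul4 c (\<phi> v))" using z xe add smul cV by simp
    moreover obtain m1 m2 m3 m4 where m: "Vop \<sigma> p (\<phi> y) = (m1,m2,m3,m4)"
      by (cases "Vop \<sigma> p (\<phi> y)") auto
    moreover have "PV p (Vop \<sigma> p (\<phi> y))" using rangeV[OF inj] by blast
    ultimately have z2: "z = (m1 + c*(a'*f1 + b'*g1), m2 + c*(a'*f2+b'*g2), m3 + c*(a'*f3 + b'*g3), m4 + c*(a'*f4+b'*g4))"
      and mp: "of_nat p dvd m1" "of_nat p dvd m3"
      by (auto simp: phv add4_def smul4_def PV_simp)
    have h1: "m1 + c*(a'*f1 + b'*g1) - c*a' = m1 + c*a'*(f1-1) + c*b'*g1" by (simp add: algebra_simps)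
    have h2: "m3 + c*(a'*f3 + b'*g3) - c*b' = m3 + c*a'*f3 + c*b'*(g3-1)" by (simp add: algebra_simps)
    have "of_nat p dvd m1 + c*(a'*f1 + b'*g1) - c*a' \<and> of_nat p dvd m3 + c*(a'*f3 + b'*g3) - c*b'"
      unfolding h1 h2 using mp fp gp by (simp add: dvd_add dvd_mult)
    then show "z \<in> SM p a' b'" unfolding SM_def z2 by auto
  qed
  have bwd: "SM p a' b' \<subseteq> \<phi> ` SM p a' b'"
  proof
    fix x assume "x \<in> SM p a' b'"
    then have "x \<in> Mmod \<sigma> p v" using M by simp
    then obtain y c where xe: "x = add4 (Vop \<sigma> p y) (smul4 c v)" unfolding Mmod_def by blast
    obtain y0 where y0: "y = \<phi> y0" using bij by (metis bij_pointE)
    obtain d where d: "diff4 (\<phi> v) v = Vop \<sigma> p d" using D rangeV[OF inj] by (metis imageE)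
    obtain z1 where z1: "d = \<phi> z1" using bij by (metis bij_pointE)
    define w where "w = diff4 v (Vop \<sigma> p z1)"
    have "\<phi> w = diff4 (\<phi> v) (diff4 (\<phi> v) v)"
      unfolding w_def diff4_lin[OF lin] cV d z1 ..
    also have "\<dots> = v" by (cases "\<phi> v") (simp add: diff4_def v_def)
    finally have phw: "\<phi> w = v" .
    define x0 where "x0 = add4 (Vop \<sigma> p y0) (smul4 c w)"
    have "\<phi> x0 = x" unfolding x0_def add smul cV phw xe y0 ..
    moreover have "x0 \<in> SM p a' b'"
    proof -
      obtain m1 m2 m3 m4 where m: "Vop \<sigma> p y0 = (m1,m2,m3,m4)" by (cases "Vop \<sigma> p y0") auto
      obtain n1 n2 n3 n4 where n: "Vop \<sigma> p z1 = (n1,n2,n3,n4)" by (cases "Vop \<sigma> p z1") auto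
      have "PV p (Vop \<sigma> p y0)" "PV p (Vop \<sigma> p z1)" using rangeV[OF inj] by blast+
      then have mp: "of_nat p dvd m1" "of_nat p dvd m3" "of_nat p dvd n1" "of_nat p dvd n3"
        using m n by (auto simp: PV_simp)
      have x0e: "x0 = (m1 + c*(a'-n1), m2 + c*(0-n2), m3 + c*(b'-n3), m4+c*(0-n4))"
        by (simp add: x0_def w_def m n v_def add4_def smul4_def diff4_def)
      have h1: "m1 + c*(a'-n1) - c*a' = m1 - c*n1" and h2: "m3 + c*(b'-n3) - c*b' = m3 - c*n3"
        by (simp_all add: algebra_simps)
      have "of_nat p dvd m1 + c*(a'-n1) - c*a' \<and> of_nat p dvd m3 + c*(b'-n3) - c*b'"
        unfolding h1 h2 using mp by (simp add: dvd_diff dvd_mult)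
      then show ?thesis unfolding SM_def x0e by auto
    qed
    ultimately show "x \<in> \<phi> ` SM p a' b'" by blast
  qed
  show "\<phi> \<in> U_x \<sigma> p (a', 0, b', 0)"
    using U fwd bwd M by (auto simp: U_x_def v_def)
qed

end
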